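(* There is a procedure which makes six two-qubit measurements, each on a fresh copy of an unknown two-qubit state $|\psi\rangle$, and which, for every $|\psi\rangle$ and every collection of outcomes of these measurements each of which occurs with nonzero probability on $|\psi\rangle$, outputs with certainty a two-qubit Pauli string $P\in\{I,X,Y,Z\}^{\otimes 2}$ that does not stabilize $|\psi\rangle$ (i.e. such that measuring the observable $P$ on $|\psi\rangle$ does not have a deterministic outcome).
   Context: For a Pauli string $P$ (a Hermitian operator with eigenvalues $\pm1$), the Pauli measurement of $P$ projects onto its $+1$ or $-1$ eigenspace and reports the eigenvalue. $P$ is called a stabilizer of a state if this outcome is deterministic and a non-stabilizer otherwise. A joint measurement of pairwise commuting Pauli strings gives outcomes for each of them, and the outcome of a product of these strings is the product of their outcomes (times the sign relating the product to the positive Pauli string). *)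

theory Defs
  imports Complex_Main "Jordan_Normal_Form.Matrix"
begin

text \<open>A two-qubit state is a unit vector in C^4; basis index 2*a+b corresponds to |a b>.\<close>

definition vnorm2 :: "complex vec \<Rightarrow> real" where
  "vnorm2 v = (\<Sum>i<dim_vec v. (cmod (v $ i))^2)"

definition is_state :: "complex vec \<Rightarrow> bool" where
  "is_state psi \<longleftrightarrow> psi \<in> carrier_vec 4 \<and> vnorm2 psi = 1"

datatype pauli1 = PI | PX | PY | PZ

definition pauli1_mat :: "pauli1 \<Rightarrow> complex mat" where
  "pauli1_mat p = (case p of
      PI \<Rightarrow> mat_of_rows_list 2 [[1, 0], [0, 1]]
    | PX \<Rightarrow> mat_of_rows_list 2 [[0, 1], [1, 0]]
    | PY \<Rightarrow> mat_of_rows_list 2 [[0, -\<i>], [\<i>, 0]]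
    | PZ \<Rightarrow> mat_of_rows_list 2 [[1, 0], [0, -1]])"

type_synonym pauli2 = "pauli1 \<times> pauli1"

definition pauli2_mat :: "pauli2 \<Rightarrow> complex mat" where
  "pauli2_mat P = (let A = pauli1_mat (fst P); B = pauli1_mat (snd P) in
     mat 4 4 (\<lambda>(i, j). A $$ (i div 2, j div 2) * B $$ (i mod 2, j mod 2)))"

definition pauli_proj :: "pauli2 \<Rightarrow> complex \<Rightarrow> complex mat" where
  "pauli_proj P s = (1/2 :: complex) \<cdot>\<^sub>m (1\<^sub>m 4 + s \<cdot>\<^sub>m pauli2_mat P)"

definition pauli_outcome_prob :: "pauli2 \<Rightarrow> complex \<Rightarrow> complex vec \<Rightarrow> real" where
  "pauli_outcome_prob P s psi = vnorm2 (pauli_proj P s *\<^sub>v psi)"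

definition is_stabilizer :: "pauli2 \<Rightarrow> complex vec \<Rightarrow> bool" where
  "is_stabilizer P psi \<longleftrightarrow> (\<exists>s \<in> {1, -1}. pauli_outcome_prob P s psi = 1)"

definition adjoint_mat :: "complex mat \<Rightarrow> complex mat" where
  "adjoint_mat M = mat (dim_col M) (dim_row M) (\<lambda>(i, j). cnj (M $$ (j, i)))"

definition is_proj_measurement :: "complex mat list \<Rightarrow> bool" where
  "is_proj_measurement Ms \<longleftrightarrow>
     Ms \<noteq> [] \<and>
     (\<forall>M \<in> set Ms. M \<in> carrier_mat 4 4 \<and> adjoint_mat M = M \<and> M * M = M) \<and>
     foldr (+) Ms (0\<^sub>m 4 4) = 1\<^sub>m 4"

definition outcome_prob :: "complex mat list \<Rightarrow> nat \<Rightarrow> complex vec \<Rightarrow> real" where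
  "outcome_prob Ms k psi = vnorm2 ((Ms ! k) *\<^sub>v psi)"

end

theory Submission
  imports Defs
begin

section \<open>Concrete projectors (Mermin-Peres magic square contexts)\<close>
definition pr00 :: "complex mat" where "pr00 = mat_of_rows_list 4 [[1/4, 1/4, 1/4, 1/4], [1/4, 1/4, 1/4, 1/4], [1/4, 1/4, 1/4, 1/4], [1/4, 1/4, 1/4, 1/4]]"
definition pr01 :: "complex mat" where "pr01 = mat_of_rows_list 4 [[1/4, -(1/4), 1/4, -(1/4)], [-(1/4), 1/4, -(1/4), 1/4], [1/4, -(1/4), 1/4, -(1/4)], [-(1/4), 1/4, -(1/4), 1/4]]"
definition pr02 :: "complex mat" where "pr02 = mat_of_rows_list 4 [[1/4, 1/4, -(1/4), -(1/4)], [1/4, 1/4, -(1/4), -(1/4)], [-(1/4), -(1/4), 1/4, 1/4], [-(1/4), -(1/4), 1/4, 1/4]]"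
definition pr03 :: "complex mat" where "pr03 = mat_of_rows_list 4 [[1/4, -(1/4), -(1/4), 1/4], [-(1/4), 1/4, 1/4, -(1/4)], [-(1/4), 1/4, 1/4, -(1/4)], [1/4, -(1/4), -(1/4), 1/4]]"
definition pr10 :: "complex mat" where "pr10 = mat_of_rows_list 4 [[1, 0, 0, 0], [0, 0, 0, 0], [0, 0, 0, 0], [0, 0, 0, 0]]"
definition pr11 :: "complex mat" where "pr11 = mat_of_rows_list 4 [[0, 0, 0, 0], [0, 0, 0, 0], [0, 0, 1, 0], [0, 0, 0, 0]]"
definition pr12 :: "complex mat" where "pr12 = mat_of_rows_list 4 [[0, 0, 0, 0], [0, 1, 0, 0], [0, 0, 0, 0], [0, 0, 0, 0]]"
definition pr13 :: "complex mat" where "pr13 = mat_of_rows_list 4 [[0, 0, 0, 0], [0, 0, 0, 0], [0, 0, 0, 0], [0, 0, 0, 1]]"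
definition pr20 :: "complex mat" where "pr20 = mat_of_rows_list 4 [[1/4, 1/4, 1/4, -(1/4)], [1/4, 1/4, 1/4, -(1/4)], [1/4, 1/4, 1/4, -(1/4)], [-(1/4), -(1/4), -(1/4), 1/4]]"
definition pr21 :: "complex mat" where "pr21 = mat_of_rows_list 4 [[1/4, -(1/4), 1/4, 1/4], [-(1/4), 1/4, -(1/4), -(1/4)], [1/4, -(1/4), 1/4, 1/4], [1/4, -(1/4), 1/4, 1/4]]"
definition pr22 :: "complex mat" where "pr22 = mat_of_rows_list 4 [[1/4, 1/4, -(1/4), 1/4], [1/4, 1/4, -(1/4), 1/4], [-(1/4), -(1/4), 1/4, -(1/4)], [1/4, 1/4, -(1/4), 1/4]]"
definition pr23 :: "complex mat" where "pr23 = mat_of_rows_list 4 [[1/4, -(1/4), -(1/4), -(1/4)], [-(1/4), 1/4, 1/4, 1/4], [-(1/4), 1/4, 1/4, 1/4], [-(1/4), 1/4, 1/4, 1/4]]"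
definition pr30 :: "complex mat" where "pr30 = mat_of_rows_list 4 [[1/2, 0, 1/2, 0], [0, 0, 0, 0], [1/2, 0, 1/2, 0], [0, 0, 0, 0]]"
definition pr31 :: "complex mat" where "pr31 = mat_of_rows_list 4 [[0, 0, 0, 0], [0, 1/2, 0, 1/2], [0, 0, 0, 0], [0, 1/2, 0, 1/2]]"
definition pr32 :: "complex mat" where "pr32 = mat_of_rows_list 4 [[1/2, 0, -(1/2), 0], [0, 0, 0, 0], [-(1/2), 0, 1/2, 0], [0, 0, 0, 0]]"
definition pr33 :: "complex mat" where "pr33 = mat_of_rows_list 4 [[0, 0, 0, 0], [0, 1/2, 0, -(1/2)], [0, 0, 0, 0], [0, -(1/2), 0, 1/2]]"
definition pr40 :: "complex mat" where "pr40 = mat_of_rows_list 4 [[1/2, 1/2, 0, 0], [1/2, 1/2, 0, 0], [0, 0, 0, 0], [0, 0, 0, 0]]"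
definition pr41 :: "complex mat" where "pr41 = mat_of_rows_list 4 [[0, 0, 0, 0], [0, 0, 0, 0], [0, 0, 1/2, 1/2], [0, 0, 1/2, 1/2]]"
definition pr42 :: "complex mat" where "pr42 = mat_of_rows_list 4 [[1/2, -(1/2), 0, 0], [-(1/2), 1/2, 0, 0], [0, 0, 0, 0], [0, 0, 0, 0]]"
definition pr43 :: "complex mat" where "pr43 = mat_of_rows_list 4 [[0, 0, 0, 0], [0, 0, 0, 0], [0, 0, 1/2, -(1/2)], [0, 0, -(1/2), 1/2]]"
definition pr50 :: "complex mat" where "pr50 = mat_of_rows_list 4 [[1/2, 0, 0, 1/2], [0, 0, 0, 0], [0, 0, 0, 0], [1/2, 0, 0, 1/2]]"
definition pr51 :: "complex mat" where "pr51 = mat_of_rows_list 4 [[0, 0, 0, 0], [0, 1/2, 1/2, 0], [0, 1/2, 1/2, 0], [0, 0, 0, 0]]"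
definition pr52 :: "complex mat" where "pr52 = mat_of_rows_list 4 [[1/2, 0, 0, -(1/2)], [0, 0, 0, 0], [0, 0, 0, 0], [-(1/2), 0, 0, 1/2]]"
definition pr53 :: "complex mat" where "pr53 = mat_of_rows_list 4 [[0, 0, 0, 0], [0, 1/2, -(1/2), 0], [0, -(1/2), 1/2, 0], [0, 0, 0, 0]]"

lemma mat4_eqI: "dim_row A = 4 \<Longrightarrow> dim_col A = 4 \<Longrightarrow> dim_row B = 4 \<Longrightarrow> dim_col B = 4 \<Longrightarrow>
  (\<forall>i\<in>{0,1,2,3}. \<forall>j\<in>{0,1,2,3}. A$$(i,j) = B$$(i,j)) \<Longrightarrow> A = B"
  apply (rule eq_matI)
  apply (auto simp: less_Suc_eq numeral_eq_Suc)
  done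

lemma mult4: "dim_col A = 4 \<Longrightarrow> dim_row B = 4 \<Longrightarrow> i < dim_row A \<Longrightarrow> j < dim_col B \<Longrightarrow>
  (A * B) $$ (i,j) = A$$(i,0)*B$$(0,j) + A$$(i,1)*B$$(1,j) + A$$(i,2)*B$$(2,j) + A$$(i,3)*B$$(3,j)"
  by (simp add: scalar_prod_def numeral_eq_Suc)

lemma mv4: "dim_col A = 4 \<Longrightarrow> dim_vec v = 4 \<Longrightarrow> i < dim_row A \<Longrightarrow>
  (A *\<^sub>v v) $ i = A$$(i,0)*v$0 + A$$(i,1)*v$1 + A$$(i,2)*v$2 + A$$(i,3)*v$3"
  by (simp add: scalar_prod_def numeral_eq_Suc)

lemma vnorm2_4: "dim_vec v = 4 \<Longrightarrow> vnorm2 v = (cmod (v$0))^2 + (cmod (v$1))^2 + (cmod (v$2))^2 + (cmod (v$3))^2"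
  unfolding vnorm2_def by (simp add: lessThan_Suc numeral_eq_Suc)

lemma mrl_dims[simp]: "dim_row (mat_of_rows_list n [a,b,c,d]) = 4" "dim_col (mat_of_rows_list n [a,b,c,d]) = n"
  by (simp_all add: mat_of_rows_list_def)
lemma mrl_idx[simp]: "i < 4 \<Longrightarrow> j < n \<Longrightarrow> mat_of_rows_list n [a,b,c,d] $$ (i,j) = [a,b,c,d] ! i ! j"
  by (simp add: mat_of_rows_list_def)

lemma p2_dims[simp]: "dim_row (pauli2_mat P) = 4" "dim_col (pauli2_mat P) = 4"
  by (simp_all add: pauli2_mat_def Let_def)
lemma pp_dims[simp]: "dim_row (pauli_proj P s) = 4" "dim_col (pauli_proj P s) = 4"
  by (simp_all add: pauli_proj_def)
lemma p1_idx: "i < 2 \<Longrightarrow> j < 2 \<Longrightarrow> pauli1_mat p $$ (i,j) = (case p of PI \<Rightarrow> [[1, 0], [0, 1]]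
    | PX \<Rightarrow> [[0, 1], [1, 0]]
    | PY \<Rightarrow> [[0, -\<i>], [\<i>, 0]]
    | PZ \<Rightarrow> [[1, 0], [0, -1::complex]]) ! i ! j"
  by (cases p) (simp_all add: pauli1_mat_def mat_of_rows_list_def)
lemma p2_idx: "i < 4 \<Longrightarrow> j < 4 \<Longrightarrow> pauli2_mat P $$ (i,j) = pauli1_mat (fst P) $$ (i div 2, j div 2) * pauli1_mat (snd P) $$ (i mod 2, j mod 2)"
  by (simp add: pauli2_mat_def Let_def)
lemma pp_idx: "i < 4 \<Longrightarrow> j < 4 \<Longrightarrow> pauli_proj P s $$ (i,j) = (1/2) * ((if i = j then 1 else 0) + s * pauli2_mat P $$ (i,j))"
  by (simp add: pauli_proj_def)

lemmas cs = p1_idx p2_idx pp_idx adjoint_mat_def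
lemma pr00_c: "pr00 \<in> carrier_mat 4 4" unfolding pr00_def by (rule carrier_matI) (simp_all only: mrl_dims)
lemma pr00_a: "adjoint_mat pr00 = pr00" unfolding pr00_def by (rule mat4_eqI) (simp_all add: cs)
lemma pr00_i: "pr00 * pr00 = pr00" unfolding pr00_def by (rule mat4_eqI) (simp_all del: index_mult_mat(1) add: cs mult4)
lemma pr01_c: "pr01 \<in> carrier_mat 4 4" unfolding pr01_def by (rule carrier_matI) (simp_all only: mrl_dims)
lemma pr01_a: "adjoint_mat pr01 = pr01" unfolding pr01_def by (rule mat4_eqI) (simp_all add: cs)
lemma pr01_i: "pr01 * pr01 = pr01" unfolding pr01_def by (rule mat4_eqI) (simp_all del: index_mult_mat(1) add: cs mult4)
lemma pr02_c: "pr02 \<in> carrier_mat 4 4" unfolding pr02_def by (rule carrier_matI) (simp_all only: mrl_dims)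
lemma pr02_a: "adjoint_mat pr02 = pr02" unfolding pr02_def by (rule mat4_eqI) (simp_all add: cs)
lemma pr02_i: "pr02 * pr02 = pr02" unfolding pr02_def by (rule mat4_eqI) (simp_all del: index_mult_mat(1) add: cs mult4)
lemma pr03_c: "pr03 \<in> carrier_mat 4 4" unfolding pr03_def by (rule carrier_matI) (simp_all only: mrl_dims)
lemma pr03_a: "adjoint_mat pr03 = pr03" unfolding pr03_def by (rule mat4_eqI) (simp_all add: cs)
lemma pr03_i: "pr03 * pr03 = pr03" unfolding pr03_def by (rule mat4_eqI) (simp_all del: index_mult_mat(1) add: cs mult4)
lemma meas0: "is_proj_measurement [pr00, pr01, pr02, pr03]"
proof -
  have "foldr (+) [pr00, pr01, pr02, pr03] (0\<^sub>m 4 4) = 1\<^sub>m 4"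
    unfolding pr00_def pr01_def pr02_def pr03_def by (rule mat4_eqI) (simp_all)
  then show ?thesis unfolding is_proj_measurement_def
    using pr00_c pr00_a pr00_i pr01_c pr01_a pr01_i pr02_c pr02_a pr02_i pr03_c pr03_a pr03_i by simp
qed

lemma pr10_c: "pr10 \<in> carrier_mat 4 4" unfolding pr10_def by (rule carrier_matI) (simp_all only: mrl_dims)
lemma pr10_a: "adjoint_mat pr10 = pr10" unfolding pr10_def by (rule mat4_eqI) (simp_all add: cs)
lemma pr10_i: "pr10 * pr10 = pr10" unfolding pr10_def by (rule mat4_eqI) (simp_all del: index_mult_mat(1) add: cs mult4)
lemma pr11_c: "pr11 \<in> carrier_mat 4 4" unfolding pr11_def by (rule carrier_matI) (simp_all only: mrl_dims)
lemma pr11_a: "adjoint_mat pr11 = pr11" unfolding pr11_def by (rule mat4_eqI) (simp_all add: cs)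
lemma pr11_i: "pr11 * pr11 = pr11" unfolding pr11_def by (rule mat4_eqI) (simp_all del: index_mult_mat(1) add: cs mult4)
lemma pr12_c: "pr12 \<in> carrier_mat 4 4" unfolding pr12_def by (rule carrier_matI) (simp_all only: mrl_dims)
lemma pr12_a: "adjoint_mat pr12 = pr12" unfolding pr12_def by (rule mat4_eqI) (simp_all add: cs)
lemma pr12_i: "pr12 * pr12 = pr12" unfolding pr12_def by (rule mat4_eqI) (simp_all del: index_mult_mat(1) add: cs mult4)
lemma pr13_c: "pr13 \<in> carrier_mat 4 4" unfolding pr13_def by (rule carrier_matI) (simp_all only: mrl_dims)
lemma pr13_a: "adjoint_mat pr13 = pr13" unfolding pr13_def by (rule mat4_eqI) (simp_all add: cs)
lemma pr13_i: "pr13 * pr13 = pr13" unfolding pr13_def by (rule mat4_eqI) (simp_all del: index_mult_mat(1) add: cs mult4)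
lemma meas1: "is_proj_measurement [pr10, pr11, pr12, pr13]"
proof -
  have "foldr (+) [pr10, pr11, pr12, pr13] (0\<^sub>m 4 4) = 1\<^sub>m 4"
    unfolding pr10_def pr11_def pr12_def pr13_def by (rule mat4_eqI) (simp_all)
  then show ?thesis unfolding is_proj_measurement_def
    using pr10_c pr10_a pr10_i pr11_c pr11_a pr11_i pr12_c pr12_a pr12_i pr13_c pr13_a pr13_i by simp
qed

lemma pr20_c: "pr20 \<in> carrier_mat 4 4" unfolding pr20_def by (rule carrier_matI) (simp_all only: mrl_dims)
lemma pr20_a: "adjoint_mat pr20 = pr20" unfolding pr20_def by (rule mat4_eqI) (simp_all add: cs)
lemma pr20_i: "pr20 * pr20 = pr20" unfolding pr20_def by (rule mat4_eqI) (simp_all del: index_mult_mat(1) add: cs mult4)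
lemma pr21_c: "pr21 \<in> carrier_mat 4 4" unfolding pr21_def by (rule carrier_matI) (simp_all only: mrl_dims)
lemma pr21_a: "adjoint_mat pr21 = pr21" unfolding pr21_def by (rule mat4_eqI) (simp_all add: cs)
lemma pr21_i: "pr21 * pr21 = pr21" unfolding pr21_def by (rule mat4_eqI) (simp_all del: index_mult_mat(1) add: cs mult4)
lemma pr22_c: "pr22 \<in> carrier_mat 4 4" unfolding pr22_def by (rule carrier_matI) (simp_all only: mrl_dims)
lemma pr22_a: "adjoint_mat pr22 = pr22" unfolding pr22_def by (rule mat4_eqI) (simp_all add: cs)
lemma pr22_i: "pr22 * pr22 = pr22" unfolding pr22_def by (rule mat4_eqI) (simp_all del: index_mult_mat(1) add: cs mult4)
lemma pr23_c: "pr23 \<in> carrier_mat 4 4" unfolding pr23_def by (rule carrier_matI) (simp_all only: mrl_dims)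
lemma pr23_a: "adjoint_mat pr23 = pr23" unfolding pr23_def by (rule mat4_eqI) (simp_all add: cs)
lemma pr23_i: "pr23 * pr23 = pr23" unfolding pr23_def by (rule mat4_eqI) (simp_all del: index_mult_mat(1) add: cs mult4)
lemma meas2: "is_proj_measurement [pr20, pr21, pr22, pr23]"
proof -
  have "foldr (+) [pr20, pr21, pr22, pr23] (0\<^sub>m 4 4) = 1\<^sub>m 4"
    unfolding pr20_def pr21_def pr22_def pr23_def by (rule mat4_eqI) (simp_all)
  then show ?thesis unfolding is_proj_measurement_def
    using pr20_c pr20_a pr20_i pr21_c pr21_a pr21_i pr22_c pr22_a pr22_i pr23_c pr23_a pr23_i by simp
qed

lemma pr30_c: "pr30 \<in> carrier_mat 4 4" unfolding pr30_def by (rule carrier_matI) (simp_all only: mrl_dims)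
lemma pr30_a: "adjoint_mat pr30 = pr30" unfolding pr30_def by (rule mat4_eqI) (simp_all add: cs)
lemma pr30_i: "pr30 * pr30 = pr30" unfolding pr30_def by (rule mat4_eqI) (simp_all del: index_mult_mat(1) add: cs mult4)
lemma pr31_c: "pr31 \<in> carrier_mat 4 4" unfolding pr31_def by (rule carrier_matI) (simp_all only: mrl_dims)
lemma pr31_a: "adjoint_mat pr31 = pr31" unfolding pr31_def by (rule mat4_eqI) (simp_all add: cs)
lemma pr31_i: "pr31 * pr31 = pr31" unfolding pr31_def by (rule mat4_eqI) (simp_all del: index_mult_mat(1) add: cs mult4)
lemma pr32_c: "pr32 \<in> carrier_mat 4 4" unfolding pr32_def by (rule carrier_matI) (simp_all only: mrl_dims)
lemma pr32_a: "adjoint_mat pr32 = pr32" unfolding pr32_def by (rule mat4_eqI) (simp_all add: cs)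
lemma pr32_i: "pr32 * pr32 = pr32" unfolding pr32_def by (rule mat4_eqI) (simp_all del: index_mult_mat(1) add: cs mult4)
lemma pr33_c: "pr33 \<in> carrier_mat 4 4" unfolding pr33_def by (rule carrier_matI) (simp_all only: mrl_dims)
lemma pr33_a: "adjoint_mat pr33 = pr33" unfolding pr33_def by (rule mat4_eqI) (simp_all add: cs)
lemma pr33_i: "pr33 * pr33 = pr33" unfolding pr33_def by (rule mat4_eqI) (simp_all del: index_mult_mat(1) add: cs mult4)
lemma meas3: "is_proj_measurement [pr30, pr31, pr32, pr33]"
proof -
  have "foldr (+) [pr30, pr31, pr32, pr33] (0\<^sub>m 4 4) = 1\<^sub>m 4"
    unfolding pr30_def pr31_def pr32_def pr33_def by (rule mat4_eqI) (simp_all)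
  then show ?thesis unfolding is_proj_measurement_def
    using pr30_c pr30_a pr30_i pr31_c pr31_a pr31_i pr32_c pr32_a pr32_i pr33_c pr33_a pr33_i by simp
qed

lemma pr40_c: "pr40 \<in> carrier_mat 4 4" unfolding pr40_def by (rule carrier_matI) (simp_all only: mrl_dims)
lemma pr40_a: "adjoint_mat pr40 = pr40" unfolding pr40_def by (rule mat4_eqI) (simp_all add: cs)
lemma pr40_i: "pr40 * pr40 = pr40" unfolding pr40_def by (rule mat4_eqI) (simp_all del: index_mult_mat(1) add: cs mult4)
lemma pr41_c: "pr41 \<in> carrier_mat 4 4" unfolding pr41_def by (rule carrier_matI) (simp_all only: mrl_dims)
lemma pr41_a: "adjoint_mat pr41 = pr41" unfolding pr41_def by (rule mat4_eqI) (simp_all add: cs)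
lemma pr41_i: "pr41 * pr41 = pr41" unfolding pr41_def by (rule mat4_eqI) (simp_all del: index_mult_mat(1) add: cs mult4)
lemma pr42_c: "pr42 \<in> carrier_mat 4 4" unfolding pr42_def by (rule carrier_matI) (simp_all only: mrl_dims)
lemma pr42_a: "adjoint_mat pr42 = pr42" unfolding pr42_def by (rule mat4_eqI) (simp_all add: cs)
lemma pr42_i: "pr42 * pr42 = pr42" unfolding pr42_def by (rule mat4_eqI) (simp_all del: index_mult_mat(1) add: cs mult4)
lemma pr43_c: "pr43 \<in> carrier_mat 4 4" unfolding pr43_def by (rule carrier_matI) (simp_all only: mrl_dims)
lemma pr43_a: "adjoint_mat pr43 = pr43" unfolding pr43_def by (rule mat4_eqI) (simp_all add: cs)
lemma pr43_i: "pr43 * pr43 = pr43" unfolding pr43_def by (rule mat4_eqI) (simp_all del: index_mult_mat(1) add: cs mult4)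
lemma meas4: "is_proj_measurement [pr40, pr41, pr42, pr43]"
proof -
  have "foldr (+) [pr40, pr41, pr42, pr43] (0\<^sub>m 4 4) = 1\<^sub>m 4"
    unfolding pr40_def pr41_def pr42_def pr43_def by (rule mat4_eqI) (simp_all)
  then show ?thesis unfolding is_proj_measurement_def
    using pr40_c pr40_a pr40_i pr41_c pr41_a pr41_i pr42_c pr42_a pr42_i pr43_c pr43_a pr43_i by simp
qed

lemma pr50_c: "pr50 \<in> carrier_mat 4 4" unfolding pr50_def by (rule carrier_matI) (simp_all only: mrl_dims)
lemma pr50_a: "adjoint_mat pr50 = pr50" unfolding pr50_def by (rule mat4_eqI) (simp_all add: cs)
lemma pr50_i: "pr50 * pr50 = pr50" unfolding pr50_def by (rule mat4_eqI) (simp_all del: index_mult_mat(1) add: cs mult4)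
lemma pr51_c: "pr51 \<in> carrier_mat 4 4" unfolding pr51_def by (rule carrier_matI) (simp_all only: mrl_dims)
lemma pr51_a: "adjoint_mat pr51 = pr51" unfolding pr51_def by (rule mat4_eqI) (simp_all add: cs)
lemma pr51_i: "pr51 * pr51 = pr51" unfolding pr51_def by (rule mat4_eqI) (simp_all del: index_mult_mat(1) add: cs mult4)
lemma pr52_c: "pr52 \<in> carrier_mat 4 4" unfolding pr52_def by (rule carrier_matI) (simp_all only: mrl_dims)
lemma pr52_a: "adjoint_mat pr52 = pr52" unfolding pr52_def by (rule mat4_eqI) (simp_all add: cs)
lemma pr52_i: "pr52 * pr52 = pr52" unfolding pr52_def by (rule mat4_eqI) (simp_all del: index_mult_mat(1) add: cs mult4)
lemma pr53_c: "pr53 \<in> carrier_mat 4 4" unfolding pr53_def by (rule carrier_matI) (simp_all only: mrl_dims)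
lemma pr53_a: "adjoint_mat pr53 = pr53" unfolding pr53_def by (rule mat4_eqI) (simp_all add: cs)
lemma pr53_i: "pr53 * pr53 = pr53" unfolding pr53_def by (rule mat4_eqI) (simp_all del: index_mult_mat(1) add: cs mult4)
lemma meas5: "is_proj_measurement [pr50, pr51, pr52, pr53]"
proof -
  have "foldr (+) [pr50, pr51, pr52, pr53] (0\<^sub>m 4 4) = 1\<^sub>m 4"
    unfolding pr50_def pr51_def pr52_def pr53_def by (rule mat4_eqI) (simp_all)
  then show ?thesis unfolding is_proj_measurement_def
    using pr50_c pr50_a pr50_i pr51_c pr51_a pr51_i pr52_c pr52_a pr52_i pr53_c pr53_a pr53_i by simp
qed

lemma kA000: "pr00 * pauli_proj (PX, PI) (-1) = 0\<^sub>m 4 4"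
  unfolding pr00_def by (rule mat4_eqI) (simp_all del: index_mult_mat(1) add: cs mult4)
lemma kA001: "pr00 * pauli_proj (PI, PX) (-1) = 0\<^sub>m 4 4"
  unfolding pr00_def by (rule mat4_eqI) (simp_all del: index_mult_mat(1) add: cs mult4)
lemma kA002: "pr00 * pauli_proj (PX, PX) (-1) = 0\<^sub>m 4 4"
  unfolding pr00_def by (rule mat4_eqI) (simp_all del: index_mult_mat(1) add: cs mult4)
lemma kA010: "pr01 * pauli_proj (PX, PI) (-1) = 0\<^sub>m 4 4"
  unfolding pr01_def by (rule mat4_eqI) (simp_all del: index_mult_mat(1) add: cs mult4)
lemma kA011: "pr01 * pauli_proj (PI, PX) (1) = 0\<^sub>m 4 4"
  unfolding pr01_def by (rule mat4_eqI) (simp_all del: index_mult_mat(1) add: cs mult4)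
lemma kA012: "pr01 * pauli_proj (PX, PX) (1) = 0\<^sub>m 4 4"
  unfolding pr01_def by (rule mat4_eqI) (simp_all del: index_mult_mat(1) add: cs mult4)
lemma kA020: "pr02 * pauli_proj (PX, PI) (1) = 0\<^sub>m 4 4"
  unfolding pr02_def by (rule mat4_eqI) (simp_all del: index_mult_mat(1) add: cs mult4)
lemma kA021: "pr02 * pauli_proj (PI, PX) (-1) = 0\<^sub>m 4 4"
  unfolding pr02_def by (rule mat4_eqI) (simp_all del: index_mult_mat(1) add: cs mult4)
lemma kA022: "pr02 * pauli_proj (PX, PX) (1) = 0\<^sub>m 4 4"
  unfolding pr02_def by (rule mat4_eqI) (simp_all del: index_mult_mat(1) add: cs mult4)
lemma kA030: "pr03 * pauli_proj (PX, PI) (1) = 0\<^sub>m 4 4"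
  unfolding pr03_def by (rule mat4_eqI) (simp_all del: index_mult_mat(1) add: cs mult4)
lemma kA031: "pr03 * pauli_proj (PI, PX) (1) = 0\<^sub>m 4 4"
  unfolding pr03_def by (rule mat4_eqI) (simp_all del: index_mult_mat(1) add: cs mult4)
lemma kA032: "pr03 * pauli_proj (PX, PX) (-1) = 0\<^sub>m 4 4"
  unfolding pr03_def by (rule mat4_eqI) (simp_all del: index_mult_mat(1) add: cs mult4)
lemma kA100: "pr10 * pauli_proj (PI, PZ) (-1) = 0\<^sub>m 4 4"
  unfolding pr10_def by (rule mat4_eqI) (simp_all del: index_mult_mat(1) add: cs mult4)
lemma kA101: "pr10 * pauli_proj (PZ, PI) (-1) = 0\<^sub>m 4 4"
  unfolding pr10_def by (rule mat4_eqI) (simp_all del: index_mult_mat(1) add: cs mult4)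
lemma kA102: "pr10 * pauli_proj (PZ, PZ) (-1) = 0\<^sub>m 4 4"
  unfolding pr10_def by (rule mat4_eqI) (simp_all del: index_mult_mat(1) add: cs mult4)
lemma kA110: "pr11 * pauli_proj (PI, PZ) (-1) = 0\<^sub>m 4 4"
  unfolding pr11_def by (rule mat4_eqI) (simp_all del: index_mult_mat(1) add: cs mult4)
lemma kA111: "pr11 * pauli_proj (PZ, PI) (1) = 0\<^sub>m 4 4"
  unfolding pr11_def by (rule mat4_eqI) (simp_all del: index_mult_mat(1) add: cs mult4)
lemma kA112: "pr11 * pauli_proj (PZ, PZ) (1) = 0\<^sub>m 4 4"
  unfolding pr11_def by (rule mat4_eqI) (simp_all del: index_mult_mat(1) add: cs mult4)
lemma kA120: "pr12 * pauli_proj (PI, PZ) (1) = 0\<^sub>m 4 4"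
  unfolding pr12_def by (rule mat4_eqI) (simp_all del: index_mult_mat(1) add: cs mult4)
lemma kA121: "pr12 * pauli_proj (PZ, PI) (-1) = 0\<^sub>m 4 4"
  unfolding pr12_def by (rule mat4_eqI) (simp_all del: index_mult_mat(1) add: cs mult4)
lemma kA122: "pr12 * pauli_proj (PZ, PZ) (1) = 0\<^sub>m 4 4"
  unfolding pr12_def by (rule mat4_eqI) (simp_all del: index_mult_mat(1) add: cs mult4)
lemma kA130: "pr13 * pauli_proj (PI, PZ) (1) = 0\<^sub>m 4 4"
  unfolding pr13_def by (rule mat4_eqI) (simp_all del: index_mult_mat(1) add: cs mult4)
lemma kA131: "pr13 * pauli_proj (PZ, PI) (1) = 0\<^sub>m 4 4"
  unfolding pr13_def by (rule mat4_eqI) (simp_all del: index_mult_mat(1) add: cs mult4)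
lemma kA132: "pr13 * pauli_proj (PZ, PZ) (-1) = 0\<^sub>m 4 4"
  unfolding pr13_def by (rule mat4_eqI) (simp_all del: index_mult_mat(1) add: cs mult4)
lemma kA200: "pr20 * pauli_proj (PX, PZ) (-1) = 0\<^sub>m 4 4"
  unfolding pr20_def by (rule mat4_eqI) (simp_all del: index_mult_mat(1) add: cs mult4)
lemma kA201: "pr20 * pauli_proj (PZ, PX) (-1) = 0\<^sub>m 4 4"
  unfolding pr20_def by (rule mat4_eqI) (simp_all del: index_mult_mat(1) add: cs mult4)
lemma kA202: "pr20 * pauli_proj (PY, PY) (-1) = 0\<^sub>m 4 4"
  unfolding pr20_def by (rule mat4_eqI) (simp_all del: index_mult_mat(1) add: cs mult4)
lemma kA210: "pr21 * pauli_proj (PX, PZ) (-1) = 0\<^sub>m 4 4"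
  unfolding pr21_def by (rule mat4_eqI) (simp_all del: index_mult_mat(1) add: cs mult4)
lemma kA211: "pr21 * pauli_proj (PZ, PX) (1) = 0\<^sub>m 4 4"
  unfolding pr21_def by (rule mat4_eqI) (simp_all del: index_mult_mat(1) add: cs mult4)
lemma kA212: "pr21 * pauli_proj (PY, PY) (1) = 0\<^sub>m 4 4"
  unfolding pr21_def by (rule mat4_eqI) (simp_all del: index_mult_mat(1) add: cs mult4)
lemma kA220: "pr22 * pauli_proj (PX, PZ) (1) = 0\<^sub>m 4 4"
  unfolding pr22_def by (rule mat4_eqI) (simp_all del: index_mult_mat(1) add: cs mult4)
lemma kA221: "pr22 * pauli_proj (PZ, PX) (-1) = 0\<^sub>m 4 4"
  unfolding pr22_def by (rule mat4_eqI) (simp_all del: index_mult_mat(1) add: cs mult4)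
lemma kA222: "pr22 * pauli_proj (PY, PY) (1) = 0\<^sub>m 4 4"
  unfolding pr22_def by (rule mat4_eqI) (simp_all del: index_mult_mat(1) add: cs mult4)
lemma kA230: "pr23 * pauli_proj (PX, PZ) (1) = 0\<^sub>m 4 4"
  unfolding pr23_def by (rule mat4_eqI) (simp_all del: index_mult_mat(1) add: cs mult4)
lemma kA231: "pr23 * pauli_proj (PZ, PX) (1) = 0\<^sub>m 4 4"
  unfolding pr23_def by (rule mat4_eqI) (simp_all del: index_mult_mat(1) add: cs mult4)
lemma kA232: "pr23 * pauli_proj (PY, PY) (-1) = 0\<^sub>m 4 4"
  unfolding pr23_def by (rule mat4_eqI) (simp_all del: index_mult_mat(1) add: cs mult4)
lemma kA300: "pr30 * pauli_proj (PX, PI) (-1) = 0\<^sub>m 4 4"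
  unfolding pr30_def by (rule mat4_eqI) (simp_all del: index_mult_mat(1) add: cs mult4)
lemma kA301: "pr30 * pauli_proj (PI, PZ) (-1) = 0\<^sub>m 4 4"
  unfolding pr30_def by (rule mat4_eqI) (simp_all del: index_mult_mat(1) add: cs mult4)
lemma kA302: "pr30 * pauli_proj (PX, PZ) (-1) = 0\<^sub>m 4 4"
  unfolding pr30_def by (rule mat4_eqI) (simp_all del: index_mult_mat(1) add: cs mult4)
lemma kA310: "pr31 * pauli_proj (PX, PI) (-1) = 0\<^sub>m 4 4"
  unfolding pr31_def by (rule mat4_eqI) (simp_all del: index_mult_mat(1) add: cs mult4)
lemma kA311: "pr31 * pauli_proj (PI, PZ) (1) = 0\<^sub>m 4 4"
  unfolding pr31_def by (rule mat4_eqI) (simp_all del: index_mult_mat(1) add: cs mult4)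
lemma kA312: "pr31 * pauli_proj (PX, PZ) (1) = 0\<^sub>m 4 4"
  unfolding pr31_def by (rule mat4_eqI) (simp_all del: index_mult_mat(1) add: cs mult4)
lemma kA320: "pr32 * pauli_proj (PX, PI) (1) = 0\<^sub>m 4 4"
  unfolding pr32_def by (rule mat4_eqI) (simp_all del: index_mult_mat(1) add: cs mult4)
lemma kA321: "pr32 * pauli_proj (PI, PZ) (-1) = 0\<^sub>m 4 4"
  unfolding pr32_def by (rule mat4_eqI) (simp_all del: index_mult_mat(1) add: cs mult4)
lemma kA322: "pr32 * pauli_proj (PX, PZ) (1) = 0\<^sub>m 4 4"
  unfolding pr32_def by (rule mat4_eqI) (simp_all del: index_mult_mat(1) add: cs mult4)
lemma kA330: "pr33 * pauli_proj (PX, PI) (1) = 0\<^sub>m 4 4"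
  unfolding pr33_def by (rule mat4_eqI) (simp_all del: index_mult_mat(1) add: cs mult4)
lemma kA331: "pr33 * pauli_proj (PI, PZ) (1) = 0\<^sub>m 4 4"
  unfolding pr33_def by (rule mat4_eqI) (simp_all del: index_mult_mat(1) add: cs mult4)
lemma kA332: "pr33 * pauli_proj (PX, PZ) (-1) = 0\<^sub>m 4 4"
  unfolding pr33_def by (rule mat4_eqI) (simp_all del: index_mult_mat(1) add: cs mult4)
lemma kA400: "pr40 * pauli_proj (PI, PX) (-1) = 0\<^sub>m 4 4"
  unfolding pr40_def by (rule mat4_eqI) (simp_all del: index_mult_mat(1) add: cs mult4)
lemma kA401: "pr40 * pauli_proj (PZ, PI) (-1) = 0\<^sub>m 4 4"
  unfolding pr40_def by (rule mat4_eqI) (simp_all del: index_mult_mat(1) add: cs mult4)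
lemma kA402: "pr40 * pauli_proj (PZ, PX) (-1) = 0\<^sub>m 4 4"
  unfolding pr40_def by (rule mat4_eqI) (simp_all del: index_mult_mat(1) add: cs mult4)
lemma kA410: "pr41 * pauli_proj (PI, PX) (-1) = 0\<^sub>m 4 4"
  unfolding pr41_def by (rule mat4_eqI) (simp_all del: index_mult_mat(1) add: cs mult4)
lemma kA411: "pr41 * pauli_proj (PZ, PI) (1) = 0\<^sub>m 4 4"
  unfolding pr41_def by (rule mat4_eqI) (simp_all del: index_mult_mat(1) add: cs mult4)
lemma kA412: "pr41 * pauli_proj (PZ, PX) (1) = 0\<^sub>m 4 4"
  unfolding pr41_def by (rule mat4_eqI) (simp_all del: index_mult_mat(1) add: cs mult4)
lemma kA420: "pr42 * pauli_proj (PI, PX) (1) = 0\<^sub>m 4 4"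
  unfolding pr42_def by (rule mat4_eqI) (simp_all del: index_mult_mat(1) add: cs mult4)
lemma kA421: "pr42 * pauli_proj (PZ, PI) (-1) = 0\<^sub>m 4 4"
  unfolding pr42_def by (rule mat4_eqI) (simp_all del: index_mult_mat(1) add: cs mult4)
lemma kA422: "pr42 * pauli_proj (PZ, PX) (1) = 0\<^sub>m 4 4"
  unfolding pr42_def by (rule mat4_eqI) (simp_all del: index_mult_mat(1) add: cs mult4)
lemma kA430: "pr43 * pauli_proj (PI, PX) (1) = 0\<^sub>m 4 4"
  unfolding pr43_def by (rule mat4_eqI) (simp_all del: index_mult_mat(1) add: cs mult4)
lemma kA431: "pr43 * pauli_proj (PZ, PI) (1) = 0\<^sub>m 4 4"
  unfolding pr43_def by (rule mat4_eqI) (simp_all del: index_mult_mat(1) add: cs mult4)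
lemma kA432: "pr43 * pauli_proj (PZ, PX) (-1) = 0\<^sub>m 4 4"
  unfolding pr43_def by (rule mat4_eqI) (simp_all del: index_mult_mat(1) add: cs mult4)
lemma kA500: "pr50 * pauli_proj (PX, PX) (-1) = 0\<^sub>m 4 4"
  unfolding pr50_def by (rule mat4_eqI) (simp_all del: index_mult_mat(1) add: cs mult4)
lemma kA501: "pr50 * pauli_proj (PZ, PZ) (-1) = 0\<^sub>m 4 4"
  unfolding pr50_def by (rule mat4_eqI) (simp_all del: index_mult_mat(1) add: cs mult4)
lemma kA502: "pr50 * pauli_proj (PY, PY) (1) = 0\<^sub>m 4 4"
  unfolding pr50_def by (rule mat4_eqI) (simp_all del: index_mult_mat(1) add: cs mult4)
lemma kA510: "pr51 * pauli_proj (PX, PX) (-1) = 0\<^sub>m 4 4"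
  unfolding pr51_def by (rule mat4_eqI) (simp_all del: index_mult_mat(1) add: cs mult4)
lemma kA511: "pr51 * pauli_proj (PZ, PZ) (1) = 0\<^sub>m 4 4"
  unfolding pr51_def by (rule mat4_eqI) (simp_all del: index_mult_mat(1) add: cs mult4)
lemma kA512: "pr51 * pauli_proj (PY, PY) (-1) = 0\<^sub>m 4 4"
  unfolding pr51_def by (rule mat4_eqI) (simp_all del: index_mult_mat(1) add: cs mult4)
lemma kA520: "pr52 * pauli_proj (PX, PX) (1) = 0\<^sub>m 4 4"
  unfolding pr52_def by (rule mat4_eqI) (simp_all del: index_mult_mat(1) add: cs mult4)
lemma kA521: "pr52 * pauli_proj (PZ, PZ) (-1) = 0\<^sub>m 4 4"
  unfolding pr52_def by (rule mat4_eqI) (simp_all del: index_mult_mat(1) add: cs mult4)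
lemma kA522: "pr52 * pauli_proj (PY, PY) (-1) = 0\<^sub>m 4 4"
  unfolding pr52_def by (rule mat4_eqI) (simp_all del: index_mult_mat(1) add: cs mult4)
lemma kA530: "pr53 * pauli_proj (PX, PX) (1) = 0\<^sub>m 4 4"
  unfolding pr53_def by (rule mat4_eqI) (simp_all del: index_mult_mat(1) add: cs mult4)
lemma kA531: "pr53 * pauli_proj (PZ, PZ) (1) = 0\<^sub>m 4 4"
  unfolding pr53_def by (rule mat4_eqI) (simp_all del: index_mult_mat(1) add: cs mult4)
lemma kA532: "pr53 * pauli_proj (PY, PY) (1) = 0\<^sub>m 4 4"
  unfolding pr53_def by (rule mat4_eqI) (simp_all del: index_mult_mat(1) add: cs mult4)

definition msl :: "complex mat list list" where "msl = [[pr00, pr01, pr02, pr03], [pr10, pr11, pr12, pr13], [pr20, pr21, pr22, pr23], [pr30, pr31, pr32, pr33], [pr40, pr41, pr42, pr43], [pr50, pr51, pr52, pr53]]"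
definition ctxl :: "pauli2 list list" where "ctxl = [[(PX, PI), (PI, PX), (PX, PX)], [(PI, PZ), (PZ, PI), (PZ, PZ)], [(PX, PZ), (PZ, PX), (PY, PY)], [(PX, PI), (PI, PZ), (PX, PZ)], [(PI, PX), (PZ, PI), (PZ, PX)], [(PX, PX), (PZ, PZ), (PY, PY)]]"
definition ctx :: "nat \<Rightarrow> nat \<Rightarrow> pauli2" where "ctx m p = ctxl ! m ! p"
definition negs :: "nat \<Rightarrow> nat \<Rightarrow> nat \<Rightarrow> bool" where
  "negs m k p = (if p = 0 then 2 \<le> k else if p = 1 then odd k else ((m = 5) \<noteq> ((2 \<le> k) \<noteq> odd k)))"

lemma less6: "m < (6::nat) \<Longrightarrow> m = 0 \<or> m = 1 \<or> m = 2 \<or> m = 3 \<or> m = 4 \<or> m = 5" by auto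
lemma less4: "m < (4::nat) \<Longrightarrow> m = 0 \<or> m = 1 \<or> m = 2 \<or> m = 3" by auto
lemma less3: "m < (3::nat) \<Longrightarrow> m = 0 \<or> m = 1 \<or> m = 2" by auto

lemma A_all: "m < 6 \<Longrightarrow> k < 4 \<Longrightarrow> p < 3 \<Longrightarrow>
  msl ! m ! k * pauli_proj (ctx m p) (if negs m k p then 1 else -1) = 0\<^sub>m 4 4"
  apply (drule less6, drule less4, drule less3)
  apply (elim disjE)
  apply (simp_all add: msl_def ctx_def ctxl_def negs_def kA000 kA001 kA002 kA010 kA011 kA012 kA020 kA021 kA022 kA030 kA031 kA032 kA100 kA101 kA102 kA110 kA111 kA112 kA120 kA121 kA122 kA130 kA131 kA132 kA200 kA201 kA202 kA210 kA211 kA212 kA220 kA221 kA222 kA230 kA231 kA232 kA300 kA301 kA302 kA310 kA311 kA312 kA320 kA321 kA322 kA330 kA331 kA332 kA400 kA401 kA402 kA410 kA411 kA412 kA420 kA421 kA422 kA430 kA431 kA432 kA500 kA501 kA502 kA510 kA511 kA512 kA520 kA521 kA522 kA530 kA531 kA532)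
  done



definition cells :: "(nat \<times> nat) list" where
  "cells = [(0,0),(0,1),(0,2),(1,0),(1,1),(1,2),(2,0),(2,1),(2,2)]"
definition disagree :: "nat list \<Rightarrow> nat \<Rightarrow> nat \<Rightarrow> bool" where
  "disagree os r c = (negs r (os ! r) c \<noteq> negs (3 + c) (os ! (3 + c)) r)"
definition outf :: "nat list \<Rightarrow> pauli2" where
  "outf os = (case filter (\<lambda>rc. disagree os (fst rc) (snd rc)) cells of
      [] \<Rightarrow> (PI, PI) | rc # _ \<Rightarrow> ctx (fst rc) (snd rc))"

lemma comb: "\<exists>rc \<in> set cells. disagree os (fst rc) (snd rc)"
  by (simp add: cells_def disagree_def negs_def) argo

lemma cells_ok: "rc \<in> set cells \<Longrightarrow> fst rc < 3 \<and> snd rc < 3 \<and> ctx (fst rc) (snd rc) = ctx (3 + snd rc) (fst rc)"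
  by (auto simp: cells_def ctx_def ctxl_def)

lemma out_prop: "\<exists>r c. r < 3 \<and> c < 3 \<and> disagree os r c \<and> outf os = ctx r c \<and> ctx r c = ctx (3 + c) r"
proof -
  let ?F = "filter (\<lambda>rc. disagree os (fst rc) (snd rc)) cells"
  have "?F \<noteq> []" using comb[of os] by (simp add: filter_empty_conv)
  then obtain rc rest where F: "?F = rc # rest" by (cases ?F) auto
  then have "rc \<in> set ?F" by simp
  then have "rc \<in> set cells" "disagree os (fst rc) (snd rc)" by auto
  moreover have "outf os = ctx (fst rc) (snd rc)" unfolding outf_def using F by simp
  ultimately show ?thesis using cells_ok by blast
qed

lemma decomp: "psi \<in> carrier_vec 4 \<Longrightarrow> pauli_proj P s *\<^sub>v psi + pauli_proj P (-s) *\<^sub>v psi = psi"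
proof -
  assume "psi \<in> carrier_vec 4"
  have "pauli_proj P s + pauli_proj P (-s) = 1\<^sub>m 4"
    by (rule eq_matI) (auto simp: pauli_proj_def algebra_simps)
  then have "pauli_proj P s *\<^sub>v psi + pauli_proj P (-s) *\<^sub>v psi = 1\<^sub>m 4 *\<^sub>v psi"
    using \<open>psi \<in> carrier_vec 4\<close>
    by (metis add_mult_distrib_mat_vec carrier_matI pp_dims)
  then show ?thesis using \<open>psi \<in> carrier_vec 4\<close> by simp
qed

lemma pnorm: "psi \<in> carrier_vec 4 \<Longrightarrow> vnorm2 (pauli2_mat P *\<^sub>v psi) = vnorm2 psi"
  apply (cases P)
  subgoal for p q
  apply (cases p; cases q)
  apply (simp_all del: index_mult_mat_vec add: vnorm2_4 mv4 p2_idx p1_idx norm_mult)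
  done
  done

lemma para: "(cmod ((a + b) / 2))^2 + (cmod ((a - b) / 2))^2 = ((cmod a)^2 + (cmod b)^2) / 2"
proof -
  have "(cmod (a+b))^2 + (cmod (a-b))^2 = 2*(cmod a)^2 + 2*(cmod b)^2"
    unfolding cmod_power2 by (simp add: power2_eq_square algebra_simps)
  then show ?thesis by (simp add: norm_divide power_divide)
qed

lemma ppv: "psi \<in> carrier_vec 4 \<Longrightarrow> i < 4 \<Longrightarrow>
  (pauli_proj P s *\<^sub>v psi) $ i = (psi $ i + s * (pauli2_mat P *\<^sub>v psi) $ i) / 2"
  apply (simp del: index_mult_mat_vec add: mv4 pp_idx)
  apply (drule less4)
  apply (elim disjE; simp add: algebra_simps)
  done

lemma pyth: "psi \<in> carrier_vec 4 \<Longrightarrow> pauli_outcome_prob P 1 psi + pauli_outcome_prob P (-1) psi = vnorm2 psi"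
proof -
  assume c: "psi \<in> carrier_vec 4"
  define w where "w = pauli2_mat P *\<^sub>v psi"
  have dw: "dim_vec w = 4" unfolding w_def by simp
  have e: "\<And>i s. i < 4 \<Longrightarrow> (pauli_proj P s *\<^sub>v psi) $ i = (psi $ i + s * w $ i) / 2"
    using ppv[OF c] unfolding w_def by simp
  have "pauli_outcome_prob P 1 psi + pauli_outcome_prob P (-1) psi
     = ((cmod (psi$0))^2 + (cmod (w$0))^2) / 2 + ((cmod (psi$1))^2 + (cmod (w$1))^2) / 2
     + ((cmod (psi$2))^2 + (cmod (w$2))^2) / 2 + ((cmod (psi$3))^2 + (cmod (w$3))^2) / 2"
    unfolding pauli_outcome_prob_def
    apply (simp only: vnorm2_4 dim_mult_mat_vec pp_dims e zero_less_numeral one_less_numeral_iff semiring_norm)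
    apply (simp only: para[symmetric] mult_1 mult_minus1 diff_conv_add_uminus[symmetric])
    apply simp
    done
  also have "\<dots> = (vnorm2 psi + vnorm2 w) / 2"
    using c dw by (simp add: vnorm2_4 field_simps)
  also have "vnorm2 w = vnorm2 psi" unfolding w_def using pnorm[OF c] .
  finally show ?thesis by simp
qed



lemma vz0: "v \<in> carrier_vec 4 \<Longrightarrow> vnorm2 v = 0 \<Longrightarrow> v = 0\<^sub>v 4"
proof -
  assume c: "v \<in> carrier_vec 4" and z: "vnorm2 v = 0"
  have "(cmod (v$0))^2 + (cmod (v$1))^2 + (cmod (v$2))^2 + (cmod (v$3))^2 = 0"
    using z c vnorm2_4[of v] by simp
  then have "v$0 = 0" "v$1 = 0" "v$2 = 0" "v$3 = 0"
    by (smt (verit) norm_eq_zero power2_less_eq_zero_iff zero_le_power2)+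
  then show ?thesis using c by (intro eq_vecI) (auto dest!: less4)
qed

lemma mv_zero: "M \<in> carrier_mat 4 4 \<Longrightarrow> M *\<^sub>v 0\<^sub>v 4 = 0\<^sub>v 4"
  by (intro eq_vecI) (auto simp: scalar_prod_def)

lemma zm_v: "psi \<in> carrier_vec 4 \<Longrightarrow> 0\<^sub>m 4 4 *\<^sub>v psi = 0\<^sub>v 4"
  by (intro eq_vecI) (auto simp: scalar_prod_def)

lemma msl_len: "m < 6 \<Longrightarrow> length (msl ! m) = 4"
  by (drule less6) (auto simp: msl_def)

lemma kill: assumes c: "psi \<in> carrier_vec 4" and M: "M \<in> carrier_mat 4 4"
  and z: "pauli_proj P (-s) *\<^sub>v psi = 0\<^sub>v 4" and A: "M * pauli_proj P s = 0\<^sub>m 4 4"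
  shows "M *\<^sub>v psi = 0\<^sub>v 4"
proof -
  have cp: "pauli_proj P t \<in> carrier_mat 4 4" for t by (rule carrier_matI) simp_all
  have "M *\<^sub>v psi = M *\<^sub>v (pauli_proj P s *\<^sub>v psi + pauli_proj P (-s) *\<^sub>v psi)"
    using decomp[OF c, of P s] by simp
  also have "\<dots> = M *\<^sub>v (pauli_proj P s *\<^sub>v psi) + M *\<^sub>v (pauli_proj P (-s) *\<^sub>v psi)"
    by (rule mult_add_distrib_mat_vec[OF M]) (auto intro!: carrier_vecI)
  also have "M *\<^sub>v (pauli_proj P s *\<^sub>v psi) = 0\<^sub>v 4"
    using assoc_mult_mat_vec[OF M cp c, of s] A zm_v[OF c] by simp
  also have "M *\<^sub>v (pauli_proj P (-s) *\<^sub>v psi) = 0\<^sub>v 4" using z mv_zero[OF M] by simp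
  finally show ?thesis by simp
qed

theorem mainTheorem6:
  shows "\<exists>(Ms :: complex mat list list) (out :: nat list \<Rightarrow> pauli2).
           length Ms = 6 \<and> (\<forall>M \<in> set Ms. is_proj_measurement M) \<and>
           (\<forall>psi os. is_state psi \<longrightarrow> length os = 6 \<longrightarrow>
              (\<forall>i < 6. os ! i < length (Ms ! i) \<and> outcome_prob (Ms ! i) (os ! i) psi > 0) \<longrightarrow>
              \<not> is_stabilizer (out os) psi)"
proof -
  have len: "length msl = 6" by (simp add: msl_def)
  have meas: "\<forall>M \<in> set msl. is_proj_measurement M"
    by (simp add: msl_def meas0 meas1 meas2 meas3 meas4 meas5)
  have main: "\<forall>psi os. is_state psi \<longrightarrow> length os = 6 \<longrightarrow>
              (\<forall>i < 6. os ! i < length (msl ! i) \<and> outcome_prob (msl ! i) (os ! i) psi > 0) \<longrightarrow>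
              \<not> is_stabilizer (outf os) psi"
  proof (intro allI impI notI)
    fix psi os
    assume st: "is_state psi" and "length os = 6"
      and H: "\<forall>i < 6. os ! i < length (msl ! i) \<and> outcome_prob (msl ! i) (os ! i) psi > 0"
      and stab: "is_stabilizer (outf os) psi"
    from st have c: "psi \<in> carrier_vec 4" and n1: "vnorm2 psi = 1" by (auto simp: is_state_def)
    obtain r c' where rc: "r < 3" "c' < 3" "disagree os r c'" "outf os = ctx r c'" "ctx r c' = ctx (3 + c') r"
      using out_prop by blast
    define P where "P = ctx r c'"
    from stab obtain s where s: "s \<in> {1, -1}" "pauli_outcome_prob P s psi = 1"
      unfolding is_stabilizer_def rc(4) P_def by blast
    have "pauli_outcome_prob P (-s) psi = 0" using pyth[OF c, of P] s n1 by auto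
    then have vz: "pauli_proj P (-s) *\<^sub>v psi = 0\<^sub>v 4"
      unfolding pauli_outcome_prob_def by (intro vz0) (auto intro: carrier_vecI)
    have "\<exists>m p. m < 6 \<and> p < 3 \<and> ctx m p = P \<and> (if negs m (os ! m) p then 1 else -1) = s"
    proof (cases "negs r (os ! r) c' = (s = 1)")
      case True
      then show ?thesis using rc s unfolding P_def by (intro exI[of _ r] exI[of _ c']) auto
    next
      case False
      then have "negs (3 + c') (os ! (3 + c')) r = (s = 1)" using rc(3) unfolding disagree_def by auto
      then show ?thesis using rc s unfolding P_def by (intro exI[of _ "3 + c'"] exI[of _ r]) auto
    qed
    then obtain m p where mp: "m < 6" "p < 3" "ctx m p = P" "(if negs m (os ! m) p then 1 else -1) = s"
      by blast
    have k: "os ! m < length (msl ! m)" and pos: "outcome_prob (msl ! m) (os ! m) psi > 0"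
      using H mp(1) by auto
    have k4: "os ! m < 4" using k msl_len[OF mp(1)] by simp
    have "msl ! m \<in> set msl" using mp(1) len by simp
    then have "is_proj_measurement (msl ! m)" using meas by blast
    then have M: "msl ! m ! (os ! m) \<in> carrier_mat 4 4"
      using k unfolding is_proj_measurement_def by (meson nth_mem)
    have A: "msl ! m ! (os ! m) * pauli_proj P s = 0\<^sub>m 4 4"
      using A_all[OF mp(1) k4 mp(2)] mp(3) mp(4) by simp
    have "msl ! m ! (os ! m) *\<^sub>v psi = 0\<^sub>v 4" by (rule kill[OF c M vz A])
    then have "outcome_prob (msl ! m) (os ! m) psi = 0"
      by (simp add: outcome_prob_def vnorm2_def)
    with pos show False by simp
  qed
  show ?thesis using len meas main by blast
qed

end
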